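(* Let $r\ge 2$ and let $\pi$ be an $r$-homogeneous strongly log-concave distribution on $2^{[n]}$, and let $P_{\mathrm{BX},\pi}$ be the corresponding bases-exchange walk. Then the modified log-Sobolev constant satisfies $$\rho(P_{\mathrm{BX},\pi})\ge \frac{1}{r}.$$
   Context: A distribution $\pi:2^{[n]}\to\mathbb{R}_{\ge0}$ has generating polynomial $g_\pi(x)=\sum_{S\subseteq[n]}\pi(S)\prod_{i\in S}x_i$. It is $r$-homogeneous if $\pi(S)>0$ only when $|S|=r$. A polynomial $p$ with nonnegative coefficients is log-concave at $x\in\mathbb{R}^n_{\ge0}$ if the Hessian $\nabla^2\log p$ is negative semidefinite at $x$; it is strongly log-concave if for every index set $I\subseteq[n]$, $\partial_I p=\prod_{i\in I}\frac{\partial}{\partial x_i}p$ is log-concave at the all-ones vector. $\pi$ is strongly log-concave if $g_\pi$ is. Let $\Omega$ be the support of $\pi$ (its elements are called bases). The bases-exchange walk $P_{\mathrm{BX},\pi}$ on $\Omega$: from the current $B$, remove an element of $B$ chosen uniformly at random to get $S$, then move to a basis $B'\in\Omega$ with $B'\supset S$ with probability proportional to $\pi(B')$. For a reversible Markov chain $P$ on a finite set $\Omega$ with stationary distribution $\pi$, the Dirichlet form is $\mathcal{E}_P(f,g)=\sum_{x,y\in\Omega}\pi(x)f(x)[I-P](x,y)g(y)$, the entropy of $f:\Omega\to\mathbb{R}_{\ge0}$ is $\mathrm{Ent}_\pi(f)=\mathbb{E}_\pi(f\log f)-\mathbb{E}_\pi f\log\mathbb{E}_\pi f$ (with $0\log0=0$,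 natural log), and the modified log-Sobolev constant is $\rho(P)=\inf\{\mathcal{E}_P(f,\log f)/\mathrm{Ent}_\pi(f): f:\Omega\to\mathbb{R}_{\ge0},\ \mathrm{Ent}_\pi(f)\ne0\}$. *)

theory Defs
  imports "HOL-Analysis.Analysis"
begin

definition is_distribution :: "nat \<Rightarrow> (nat set \<Rightarrow> real) \<Rightarrow> bool" where
  "is_distribution n \<pi> \<longleftrightarrow>
     (\<forall>S. \<pi> S \<ge> 0) \<and> (\<forall>S. \<pi> S \<noteq> 0 \<longrightarrow> S \<subseteq> {..<n}) \<and>
     (\<Sum>S\<in>Pow {..<n}. \<pi> S) = 1"

definition homogeneous :: "nat \<Rightarrow> (nat set \<Rightarrow> real) \<Rightarrow> bool" where
  "homogeneous r \<pi> \<longleftrightarrow> (\<forall>S. \<pi> S > 0 \<longrightarrow> card S = r)"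

text \<open>Generating polynomial, as a function of x : nat => real (only coordinates in [n] matter).\<close>

definition gen_poly :: "nat \<Rightarrow> (nat set \<Rightarrow> real) \<Rightarrow> (nat \<Rightarrow> real) \<Rightarrow> real" where
  "gen_poly n \<pi> x = (\<Sum>S\<in>Pow {..<n}. \<pi> S * (\<Prod>i\<in>S. x i))"

definition pdiff :: "nat \<Rightarrow> ((nat \<Rightarrow> real) \<Rightarrow> real) \<Rightarrow> (nat \<Rightarrow> real) \<Rightarrow> real" where
  "pdiff i f x = deriv (\<lambda>t. f (x(i := t))) (x i)"

definition pdiff_set :: "nat set \<Rightarrow> ((nat \<Rightarrow> real) \<Rightarrow> real) \<Rightarrow> (nat \<Rightarrow> real) \<Rightarrow> real" where
  "pdiff_set I f = foldr pdiff (sorted_list_of_set I) f"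

text \<open>Log-concave at x: the Hessian of log p at x (as a form on R^n) is negative semidefinite.
  (With Isabelle's ln 0 = 0, the zero polynomial is log-concave, matching the usual convention.)\<close>

definition log_concave_at :: "nat \<Rightarrow> ((nat \<Rightarrow> real) \<Rightarrow> real) \<Rightarrow> (nat \<Rightarrow> real) \<Rightarrow> bool" where
  "log_concave_at n p x \<longleftrightarrow>
     (\<forall>v :: nat \<Rightarrow> real. (\<Sum>i<n. \<Sum>j<n. v i * pdiff i (pdiff j (\<lambda>y. ln (p y))) x * v j) \<le> 0)"

definition strongly_log_concave :: "nat \<Rightarrow> ((nat \<Rightarrow> real) \<Rightarrow> real) \<Rightarrow> bool" where
  "strongly_log_concave n p \<longleftrightarrow>
     (\<forall>I\<subseteq>{..<n}. log_concave_at n (pdiff_set I p) (\<lambda>_. 1))"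

definition support :: "(nat set \<Rightarrow> real) \<Rightarrow> nat set set" where
  "support \<pi> = {S. \<pi> S > 0}"

text \<open>Bases-exchange walk: remove a uniform element i of B, then move to B' \<supseteq> B - {i}
  in the support with probability proportional to \<pi> B'.\<close>

definition bx_walk :: "(nat set \<Rightarrow> real) \<Rightarrow> nat set \<Rightarrow> nat set \<Rightarrow> real" where
  "bx_walk \<pi> B B' =
     (\<Sum>i\<in>B. if B - {i} \<subseteq> B' \<and> B' \<in> support \<pi>
              then \<pi> B' / (\<Sum>C\<in>{C\<in>support \<pi>. B - {i} \<subseteq> C}. \<pi> C) else 0) / real (card B)"

definition dirichlet_form ::
  "'a set \<Rightarrow> ('a \<Rightarrow> real) \<Rightarrow> ('a \<Rightarrow> 'a \<Rightarrow> real) \<Rightarrow> ('a \<Rightarrow> real) \<Rightarrow> ('a \<Rightarrow> real) \<Rightarrow> real"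
  where "dirichlet_form \<Omega> \<pi> P f g =
    (\<Sum>x\<in>\<Omega>. \<Sum>y\<in>\<Omega>. \<pi> x * f x * ((if x = y then 1 else 0) - P x y) * g y)"

definition entropy :: "'a set \<Rightarrow> ('a \<Rightarrow> real) \<Rightarrow> ('a \<Rightarrow> real) \<Rightarrow> real" where
  "entropy \<Omega> \<pi> f =
    (\<Sum>x\<in>\<Omega>. \<pi> x * (f x * ln (f x))) - (\<Sum>x\<in>\<Omega>. \<pi> x * f x) * ln (\<Sum>x\<in>\<Omega>. \<pi> x * f x)"

text \<open>Infimum taken in the extended reals (inf of the empty set is +\<infinity>); test functions are
  taken strictly positive on \<Omega>.\<close>

definition mlsi_const :: "'a set \<Rightarrow> ('a \<Rightarrow> real) \<Rightarrow> ('a \<Rightarrow> 'a \<Rightarrow> real) \<Rightarrow> ereal" where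
  "mlsi_const \<Omega> \<pi> P =
    (INF f\<in>{f. (\<forall>x\<in>\<Omega>. f x > 0) \<and> entropy \<Omega> \<pi> f \<noteq> 0}.
       ereal (dirichlet_form \<Omega> \<pi> P f (\<lambda>x. ln (f x)) / entropy \<Omega> \<pi> f))"

end

theory Submission
  imports Defs
begin

locale slcctx =
  fixes n r :: nat and \<pi> :: "nat set \<Rightarrow> real" and f :: "nat set \<Rightarrow> real"
  assumes dist: "is_distribution n \<pi>"
    and hom: "homogeneous r \<pi>"
    and fpos: "\<And>S. \<pi> S > 0 \<Longrightarrow> f S > 0"
begin

definition "Xs J = {S\<in>Pow {..<n}. J \<subseteq> S}"
definition "w J = (\<Sum>S\<in>Xs J. \<pi> S)"
definition "M J = (\<Sum>S\<in>Xs J. \<pi> S * f S)"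
definition "psi J = M J * ln (M J / w J)"
definition "Ys j I = {J\<in>Pow {..<n}. I \<subseteq> J \<and> card J = card I + j}"
definition "W j I = (\<Sum>J\<in>Ys j I. psi J)"
definition "R I = {..<n} - I"

lemma pi_nn: "\<pi> S \<ge> 0"
  using dist unfolding is_distribution_def by auto

lemma pi_pos: "\<pi> S \<noteq> 0 \<Longrightarrow> \<pi> S > 0"
  using pi_nn[of S] by linarith

lemma pi_sub: "\<pi> S \<noteq> 0 \<Longrightarrow> S \<subseteq> {..<n}"
  using dist unfolding is_distribution_def by auto

lemma pi_card: "\<pi> S \<noteq> 0 \<Longrightarrow> card S = r"
  using hom pi_pos unfolding homogeneous_def by auto

lemma fin_Xs[simp]: "finite (Xs J)" unfolding Xs_def by auto
lemma fin_Ys[simp]: "finite (Ys j J)" unfolding Ys_def by auto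
lemma fin_R[simp]: "finite (R I)" unfolding R_def by auto

lemma w_nn: "w J \<ge> 0" unfolding w_def by (intro sum_nonneg) (simp add: pi_nn)

lemma term_nn: "\<pi> S * f S \<ge> 0"
proof (cases "\<pi> S = 0")
  case False
  then have "\<pi> S > 0" by (rule pi_pos)
  then show ?thesis using fpos[of S] by simp
qed simp

lemma M_nn: "M J \<ge> 0" unfolding M_def
  by (intro sum_nonneg term_nn)

lemma w_zero_M: "w J = 0 \<Longrightarrow> M J = 0"
proof -
  assume "w J = 0"
  then have "\<forall>S\<in>Xs J. \<pi> S = 0" unfolding w_def
    using sum_nonneg_eq_0_iff[of "Xs J" \<pi>] pi_nn by auto
  then show "M J = 0" unfolding M_def by simp
qed

lemma w_pos_M: "w J > 0 \<Longrightarrow> M J > 0"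
proof -
  assume "w J > 0"
  then have "\<not> (\<forall>S\<in>Xs J. \<pi> S = 0)" unfolding w_def by (metis less_irrefl sum.neutral)
  then obtain S where S: "S \<in> Xs J" "\<pi> S \<noteq> 0" by blast
  then have "\<pi> S * f S > 0" using fpos pi_pos by auto
  moreover have "\<pi> S * f S \<le> M J" unfolding M_def
    by (rule member_le_sum[OF S(1)]) (auto intro: term_nn)
  ultimately show ?thesis by linarith
qed

lemma w_big: "card J > r \<Longrightarrow> finite J \<Longrightarrow> w J = 0"
proof -
  assume a: "card J > r" "finite J"
  have "\<pi> S = 0" if "S \<in> Xs J" for S
  proof (rule ccontr)
    assume "\<pi> S \<noteq> 0"
    then have "card S = r" "S \<subseteq> {..<n}" using pi_card pi_sub by auto
    moreover have "J \<subseteq> S" using that unfolding Xs_def by auto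
    ultimately have "card J \<le> r" by (metis card_mono finite_lessThan finite_subset)
    then show False using a by simp
  qed
  then show ?thesis unfolding w_def by simp
qed

lemma psi_zero: "w J = 0 \<Longrightarrow> psi J = 0"
  unfolding psi_def using w_zero_M by simp

lemma dc:
  assumes "I \<subseteq> {..<n}" "card I \<le> r"
  shows "(\<Sum>x\<in>R I. \<Sum>S\<in>Xs (insert x I). \<pi> S * g S) = real (r - card I) * (\<Sum>S\<in>Xs I. \<pi> S * g S)"
proof -
  have finI: "finite I" using assms(1) finite_subset by blast
  have "(\<Sum>x\<in>R I. \<Sum>S\<in>Xs (insert x I). \<pi> S * g S) = (\<Sum>x\<in>R I. \<Sum>S\<in>{S\<in>Xs I. x \<in> S}. \<pi> S * g S)"
    by (intro sum.cong refl) (auto simp: Xs_def)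
  also have "\<dots> = (\<Sum>S\<in>Xs I. \<Sum>x\<in>{x\<in>R I. x \<in> S}. \<pi> S * g S)"
    by (rule sum.swap_restrict) auto
  also have "\<dots> = (\<Sum>S\<in>Xs I. real (r - card I) * (\<pi> S * g S))"
  proof (intro sum.cong refl)
    fix S assume S: "S \<in> Xs I"
    show "(\<Sum>x\<in>{x\<in>R I. x \<in> S}. \<pi> S * g S) = real (r - card I) * (\<pi> S * g S)"
    proof (cases "\<pi> S = 0")
      case False
      have "{x\<in>R I. x \<in> S} = S - I" using S unfolding R_def Xs_def by auto
      moreover have "card (S - I) = r - card I" using pi_card[OF False] S finI
        by (simp add: Xs_def card_Diff_subset)
      ultimately show ?thesis by simp
    qed simp
  qed
  also have "\<dots> = real (r - card I) * (\<Sum>S\<in>Xs I. \<pi> S * g S)"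
    by (simp add: sum_distrib_left)
  finally show ?thesis .
qed

lemma dc_w:
  assumes "I \<subseteq> {..<n}" "card I \<le> r"
  shows "(\<Sum>x\<in>R I. w (insert x I)) = real (r - card I) * w I"
  using dc[OF assms, of "\<lambda>_. 1"] unfolding w_def by simp

lemma dc_M:
  assumes "I \<subseteq> {..<n}" "card I \<le> r"
  shows "(\<Sum>x\<in>R I. M (insert x I)) = real (r - card I) * M I"
  using dc[OF assms, of f] unfolding M_def by simp

lemma tower_gen:
  assumes "I \<subseteq> {..<n}" "j \<ge> 1"
  shows "(\<Sum>x\<in>R I. \<Sum>J\<in>Ys (j - 1) (insert x I). g J) = real j * (\<Sum>J\<in>Ys j I. g J)"
proof -
  have finI: "finite I" using assms(1) finite_subset by blast
  have "(\<Sum>x\<in>R I. \<Sum>J\<in>Ys (j - 1) (insert x I). g J) = (\<Sum>x\<in>R I. \<Sum>J\<in>{J\<in>Ys j I. x \<in> J}. g J)"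
  proof (rule sum.cong[OF refl])
    fix x assume x: "x \<in> R I"
    then have "card (insert x I) = card I + 1" using finI by (simp add: R_def)
    then have "Ys (j - 1) (insert x I) = {J \<in> Ys j I. x \<in> J}"
      using assms(2) x by (auto simp: Ys_def R_def)
    then show "(\<Sum>J\<in>Ys (j - 1) (insert x I). g J) = (\<Sum>J\<in>{J \<in> Ys j I. x \<in> J}. g J)"
      by simp
  qed
  also have "\<dots> = (\<Sum>J\<in>Ys j I. \<Sum>x\<in>{x\<in>R I. x \<in> J}. g J)"
    by (rule sum.swap_restrict) auto
  also have "\<dots> = (\<Sum>J\<in>Ys j I. real j * g J)"
  proof (intro sum.cong refl)
    fix J assume J: "J \<in> Ys j I"
    have "{x\<in>R I. x \<in> J} = J - I" using J unfolding R_def Ys_def by auto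
    moreover have "card (J - I) = j" using J finI
      by (simp add: Ys_def card_Diff_subset)
    ultimately show "(\<Sum>x\<in>{x\<in>R I. x \<in> J}. g J) = real j * g J" by simp
  qed
  also have "\<dots> = real j * (\<Sum>J\<in>Ys j I. g J)" by (simp add: sum_distrib_left)
  finally show ?thesis .
qed

lemma tower:
  assumes "I \<subseteq> {..<n}" "j \<ge> 1"
  shows "(\<Sum>x\<in>R I. W (j - 1) (insert x I)) = real j * W j I"
  using tower_gen[OF assms, of psi] unfolding W_def by simp

lemma W0: "J \<subseteq> {..<n} \<Longrightarrow> W 0 J = psi J"
proof -
  assume "J \<subseteq> {..<n}"
  moreover have "x = J" if "x \<subseteq> {..<n}" "J \<subseteq> x" "card x = card J" for x
    using card_subset_eq[of x J] that finite_subset[OF that(1)] by auto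
  ultimately have "Ys 0 J = {J}" unfolding Ys_def by auto
  then show ?thesis unfolding W_def by simp
qed

lemma W_big: "I \<subseteq> {..<n} \<Longrightarrow> card I + j > r \<Longrightarrow> W j I = 0"
  unfolding W_def Ys_def
  by (intro sum.neutral) (auto intro!: psi_zero w_big dest: finite_subset)

end

lemma gibbs_term:
  fixes q a b K :: real
  assumes "q \<ge> 0" "q > 0 \<Longrightarrow> a > 0 \<and> b > 0" "K > 0"
  shows "q * a * ln (a / b) \<ge> q * a * ln K + q * a - q * b * K"
proof (cases "q = 0")
  case False
  then have q: "q > 0" and a: "a > 0" and b: "b > 0" using assms by auto
  have "ln (a / b) - ln K = ln (a / (b * K))"
    using a b assms(3) by (simp add: ln_div ln_mult)
  also have "\<dots> \<ge> 1 - (b * K) / a"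
  proof -
    have "ln ((b * K) / a) \<le> (b * K) / a - 1"
      using a b assms(3) by (intro ln_le_minus_one) simp
    moreover have "ln ((b * K) / a) = - ln (a / (b * K))"
      using a b assms(3) by (simp add: ln_div)
    ultimately show ?thesis by linarith
  qed
  finally have "ln (a / b) - ln K \<ge> 1 - (b * K) / a" .
  then have "q * a * (ln (a / b) - ln K) \<ge> q * a * (1 - (b * K) / a)"
    using q a by (intro mult_left_mono) auto
  then show ?thesis using a by (simp add: algebra_simps)
qed simp

context slcctx
begin

lemma w_mono: "I \<subseteq> J \<Longrightarrow> w J \<le> w I"
  unfolding w_def by (intro sum_mono2) (auto simp: Xs_def pi_nn)

lemma W_wzero: "w I = 0 \<Longrightarrow> W j I = 0"
  unfolding W_def
proof (intro sum.neutral ballI psi_zero)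
  fix J assume "w I = 0" "J \<in> Ys j I"
  then have "w J \<le> 0" using w_mono[of I J] unfolding Ys_def by auto
  then show "w J = 0" using w_nn[of J] by simp
qed

lemma R_insert: "R (insert x I) = R I - {x}"
  unfolding R_def by auto

lemma card_ins: "I \<subseteq> {..<n} \<Longrightarrow> x \<in> R I \<Longrightarrow> card (insert x I) = card I + 1"
  unfolding R_def by (simp add: finite_subset)

lemma ins_sub: "I \<subseteq> {..<n} \<Longrightarrow> x \<in> R I \<Longrightarrow> insert x I \<subseteq> {..<n}"
  unfolding R_def by auto

definition "F J = M J / w J"

lemma wF: "w J * F J = M J"
  unfolding F_def using w_zero_M by (cases "w J = 0") auto

lemma psiF: "psi J = M J * ln (F J)"
  unfolding psi_def F_def ..

lemma F_pos: "w J > 0 \<Longrightarrow> F J > 0"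
  unfolding F_def using w_pos_M by auto

definition "QB I \<longleftrightarrow> (\<forall>u. (\<Sum>x\<in>R I. \<Sum>y\<in>R I - {x}. w (insert y (insert x I)) * u x * u y)
    \<le> (real (r - card I) - 1) / (real (r - card I) * w I) * (\<Sum>x\<in>R I. w (insert x I) * u x)^2)"

lemma W1_eq: "I \<subseteq> {..<n} \<Longrightarrow> W 1 I = (\<Sum>x\<in>R I. psi (insert x I))"
proof -
  assume I: "I \<subseteq> {..<n}"
  have "(\<Sum>x\<in>R I. W 0 (insert x I)) = (\<Sum>x\<in>R I. psi (insert x I))"
  proof (rule sum.cong[OF refl])
    fix x assume "x \<in> R I"
    then show "W 0 (insert x I) = psi (insert x I)" using W0 ins_sub[OF I] by blast
  qed
  then show ?thesis using tower[of I 1] I by simp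
qed

lemma W2_eq: "I \<subseteq> {..<n} \<Longrightarrow>
   2 * W 2 I = (\<Sum>x\<in>R I. \<Sum>y\<in>R I - {x}. psi (insert y (insert x I)))"
proof -
  assume I: "I \<subseteq> {..<n}"
  have "(\<Sum>x\<in>R I. W 1 (insert x I)) = (\<Sum>x\<in>R I. \<Sum>y\<in>R I - {x}. psi (insert y (insert x I)))"
  proof (rule sum.cong[OF refl])
    fix x assume "x \<in> R I"
    then show "W 1 (insert x I) = (\<Sum>y\<in>R I - {x}. psi (insert y (insert x I)))"
      using W1_eq[OF ins_sub[OF I]] R_insert by metis
  qed
  then show ?thesis using tower[of I 2] I by simp
qed

lemma Q2:
  assumes I: "I \<subseteq> {..<n}" and m: "card I + m = r" "m \<ge> 2" and wI: "w I > 0" and qb: "QB I"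
  shows "2 * W 2 I \<ge> 2 * (real m - 1) * W 1 I - real m * (real m - 1) * W 0 I"
proof -
  define q where "q x y = w (insert y (insert x I))" for x y
  define a where "a x y = F (insert y (insert x I))" for x y
  define b where "b x y = F (insert x I) * F (insert y I) / F I ^ 2" for x y
  define K where "K = F I"
  have K: "K > 0" unfolding K_def using F_pos wI .
  have crd: "card I \<le> r" using m by simp
  have qa: "q x y * a x y = M (insert y (insert x I))" for x y
    unfolding q_def a_def using wF by simp
  have terms: "q x y * a x y * ln (a x y / b x y) \<ge> q x y * a x y * ln K + q x y * a x y - q x y * b x y * K"
    if "x \<in> R I" "y \<in> R I - {x}" for x y
  proof (rule gibbs_term[OF _ _ K])
    show "q x y \<ge> 0" unfolding q_def by (rule w_nn)
    assume "q x y > 0"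
    then have "w (insert y (insert x I)) > 0" unfolding q_def .
    moreover have "w (insert y (insert x I)) \<le> w (insert x I)" "w (insert y (insert x I)) \<le> w (insert y I)"
      by (auto intro: w_mono)
    ultimately show "a x y > 0 \<and> b x y > 0" unfolding a_def b_def using F_pos K K_def by auto
  qed
  have gib: "(\<Sum>x\<in>R I. \<Sum>y\<in>R I - {x}. q x y * a x y * ln (a x y / b x y)) \<ge>
     (\<Sum>x\<in>R I. \<Sum>y\<in>R I - {x}. q x y * a x y) * ln K + (\<Sum>x\<in>R I. \<Sum>y\<in>R I - {x}. q x y * a x y)
       - (\<Sum>x\<in>R I. \<Sum>y\<in>R I - {x}. q x y * b x y) * K"
  proof -
    have "(\<Sum>x\<in>R I. \<Sum>y\<in>R I - {x}. q x y * a x y * ln (a x y / b x y)) \<ge>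
       (\<Sum>x\<in>R I. \<Sum>y\<in>R I - {x}. q x y * a x y * ln K + q x y * a x y - q x y * b x y * K)"
      using terms by (intro sum_mono) auto
    then show ?thesis
      by (simp add: sum.distrib sum_subtractf sum_distrib_right)
  qed
  have inner: "(\<Sum>y\<in>R I - {x}. M (insert y (insert x I))) = (real m - 1) * M (insert x I)"
    if x: "x \<in> R I" for x
  proof -
    have "(\<Sum>y\<in>R (insert x I). M (insert y (insert x I))) = real (r - card (insert x I)) * M (insert x I)"
      using dc_M[of "insert x I"] ins_sub[OF I x] card_ins[OF I x] m by simp
    then show ?thesis using card_ins[OF I x] m by (simp add: R_insert of_nat_diff)
  qed
  have A: "(\<Sum>x\<in>R I. \<Sum>y\<in>R I - {x}. q x y * a x y) = (real m - 1) * real m * M I"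
  proof -
    have "(\<Sum>x\<in>R I. \<Sum>y\<in>R I - {x}. q x y * a x y) = (\<Sum>x\<in>R I. (real m - 1) * M (insert x I))"
      using inner by (simp add: qa)
    also have "\<dots> = (real m - 1) * real m * M I"
      using dc_M[OF I crd] m by (simp add: sum_distrib_left[symmetric])
    finally show ?thesis .
  qed
  have sumwF: "(\<Sum>x\<in>R I. w (insert x I) * F (insert x I)) = real m * M I"
    using dc_M[OF I crd] m by (simp add: wF)
  have alg: "((real m - 1) / (real m * w I) * (real m * (K * w I))^2) / K ^ 2 = (real m - 1) * real m * w I"
  proof -
    have "(real m * (K * w I))^2 = real m * real m * (K * K) * (w I * w I)"
      by (simp add: power2_eq_square)
    moreover have "K \<noteq> 0" "real m \<noteq> 0" "w I \<noteq> 0" using K m wI by auto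
    ultimately show ?thesis by (simp add: field_simps power2_eq_square)
  qed
  have KMI: "K * w I = M I" unfolding K_def using wF by (simp add: mult.commute)
  have qbu: "(\<Sum>x\<in>R I. \<Sum>y\<in>R I - {x}. w (insert y (insert x I)) * F (insert x I) * F (insert y I))
      \<le> (real (r - card I) - 1) / (real (r - card I) * w I) * (\<Sum>x\<in>R I. w (insert x I) * F (insert x I))^2"
    using qb unfolding QB_def by (erule_tac x="\<lambda>x. F (insert x I)" in allE) simp
  have rm: "real (r - card I) = real m" using m by simp
  have B: "(\<Sum>x\<in>R I. \<Sum>y\<in>R I - {x}. q x y * b x y) \<le> (real m - 1) * real m * w I"
  proof -
    have "(\<Sum>x\<in>R I. \<Sum>y\<in>R I - {x}. q x y * b x y) =
       (\<Sum>x\<in>R I. \<Sum>y\<in>R I - {x}. w (insert y (insert x I)) * F (insert x I) * F (insert y I)) / K ^ 2"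
      unfolding q_def b_def K_def by (simp add: sum_divide_distrib mult.assoc)
    also have "\<dots> \<le> ((real m - 1) / (real m * w I) * (real m * (K * w I))^2) / K ^ 2"
      using qbu unfolding rm sumwF KMI by (rule divide_right_mono) simp
    also have "\<dots> = (real m - 1) * real m * w I" by (rule alg)
    finally show ?thesis .
  qed
  have B': "(\<Sum>x\<in>R I. \<Sum>y\<in>R I - {x}. q x y * b x y) * K \<le> (real m - 1) * real m * M I"
  proof -
    have "(\<Sum>x\<in>R I. \<Sum>y\<in>R I - {x}. q x y * b x y) * K \<le> (real m - 1) * real m * w I * K"
      using B K by (intro mult_right_mono) auto
    also have "\<dots> = (real m - 1) * real m * M I"
      using KMI by (simp add: mult.commute mult.left_commute)
    finally show ?thesis .
  qed
  have lnb: "ln (a x y / b x y) = ln (F (insert y (insert x I))) - ln (F (insert x I)) - ln (F (insert y I)) + 2 * ln K"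
    if "q x y > 0" for x y
  proof -
    have "w (insert y (insert x I)) > 0" using that unfolding q_def .
    moreover have "w (insert y (insert x I)) \<le> w (insert x I)" "w (insert y (insert x I)) \<le> w (insert y I)"
      by (auto intro: w_mono)
    ultimately have p: "F (insert y (insert x I)) > 0" "F (insert x I) > 0" "F (insert y I) > 0"
      using F_pos by auto
    show ?thesis unfolding a_def b_def K_def using p K[unfolded K_def]
      by (simp add: ln_div ln_mult power2_eq_square)
  qed
  have lhs_term: "q x y * a x y * ln (a x y / b x y) = psi (insert y (insert x I)) - M (insert y (insert x I)) * ln (F (insert x I))
     - M (insert y (insert x I)) * ln (F (insert y I)) + 2 * ln K * M (insert y (insert x I))" for x y
  proof (cases "q x y > 0")
    case True
    show ?thesis unfolding qa lnb[OF True] psiF by (simp add: algebra_simps)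
  next
    case False
    then have "q x y = 0" using w_nn[of "insert y (insert x I)"] unfolding q_def by auto
    then have "M (insert y (insert x I)) = 0" unfolding q_def using w_zero_M by auto
    then show ?thesis unfolding qa psiF by simp
  qed
  have s1: "(\<Sum>x\<in>R I. \<Sum>y\<in>R I - {x}. M (insert y (insert x I)) * ln (F (insert x I))) = (real m - 1) * W 1 I"
  proof -
    have "(\<Sum>x\<in>R I. \<Sum>y\<in>R I - {x}. M (insert y (insert x I)) * ln (F (insert x I)))
        = (\<Sum>x\<in>R I. (real m - 1) * psi (insert x I))"
    proof (rule sum.cong[OF refl])
      fix x assume x: "x \<in> R I"
      have "(\<Sum>y\<in>R I - {x}. M (insert y (insert x I)) * ln (F (insert x I)))
          = (\<Sum>y\<in>R I - {x}. M (insert y (insert x I))) * ln (F (insert x I))"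
        by (rule sum_distrib_right[symmetric])
      then show "(\<Sum>y\<in>R I - {x}. M (insert y (insert x I)) * ln (F (insert x I))) = (real m - 1) * psi (insert x I)"
        using inner[OF x] by (simp add: psiF)
    qed
    then show ?thesis using W1_eq[OF I] by (simp add: sum_distrib_left)
  qed
  have swap: "(\<Sum>x\<in>R I. \<Sum>y\<in>R I - {x}. g x y) = (\<Sum>y\<in>R I. \<Sum>x\<in>R I - {y}. g x y)" for g :: "nat \<Rightarrow> nat \<Rightarrow> real"
  proof -
    have "(\<Sum>x\<in>R I. \<Sum>y\<in>R I - {x}. g x y) = (\<Sum>x\<in>R I. \<Sum>y\<in>{y\<in>R I. x \<noteq> y}. g x y)"
      by (intro sum.cong refl) auto
    also have "\<dots> = (\<Sum>y\<in>R I. \<Sum>x\<in>{x\<in>R I. x \<noteq> y}. g x y)"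
      by (rule sum.swap_restrict) auto
    also have "\<dots> = (\<Sum>y\<in>R I. \<Sum>x\<in>R I - {y}. g x y)"
      by (intro sum.cong refl) auto
    finally show ?thesis .
  qed
  have s2: "(\<Sum>x\<in>R I. \<Sum>y\<in>R I - {x}. M (insert y (insert x I)) * ln (F (insert y I))) = (real m - 1) * W 1 I"
  proof -
    have "(\<Sum>x\<in>R I. \<Sum>y\<in>R I - {x}. M (insert y (insert x I)) * ln (F (insert y I)))
       = (\<Sum>y\<in>R I. \<Sum>x\<in>R I - {y}. M (insert x (insert y I)) * ln (F (insert y I)))"
      by (subst swap) (simp add: insert_commute)
    also have "\<dots> = (real m - 1) * W 1 I"
      using s1 by simp
    finally show ?thesis .
  qed
  have lhs: "(\<Sum>x\<in>R I. \<Sum>y\<in>R I - {x}. q x y * a x y * ln (a x y / b x y))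
     = 2 * W 2 I - 2 * (real m - 1) * W 1 I + 2 * ln K * ((real m - 1) * real m * M I)"
  proof -
    have "(\<Sum>x\<in>R I. \<Sum>y\<in>R I - {x}. q x y * a x y * ln (a x y / b x y))
     = (\<Sum>x\<in>R I. \<Sum>y\<in>R I - {x}. psi (insert y (insert x I)))
       - (\<Sum>x\<in>R I. \<Sum>y\<in>R I - {x}. M (insert y (insert x I)) * ln (F (insert x I)))
       - (\<Sum>x\<in>R I. \<Sum>y\<in>R I - {x}. M (insert y (insert x I)) * ln (F (insert y I)))
       + 2 * ln K * (\<Sum>x\<in>R I. \<Sum>y\<in>R I - {x}. q x y * a x y)"
      unfolding lhs_term unfolding qa by (simp add: sum.distrib sum_subtractf sum_distrib_left)
    then show ?thesis using W2_eq[OF I] s1 s2 A by simp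
  qed
  have W0I: "W 0 I = M I * ln K" using W0[OF I] psiF K_def by simp
  define AA where "AA = (real m - 1) * real m * M I"
  define L where "L = AA * ln K"
  have L1: "(\<Sum>x\<in>R I. \<Sum>y\<in>R I - {x}. q x y * a x y) * ln K = L" unfolding L_def AA_def A ..
  have L2: "2 * ln K * ((real m - 1) * real m * M I) = 2 * L" unfolding L_def AA_def by simp
  have L3: "L = real m * (real m - 1) * W 0 I" unfolding L_def AA_def W0I by simp
  have B'': "(\<Sum>x\<in>R I. \<Sum>y\<in>R I - {x}. q x y * b x y) * K \<le> AA" using B' unfolding AA_def .
  have A': "(\<Sum>x\<in>R I. \<Sum>y\<in>R I - {x}. q x y * a x y) = AA" unfolding AA_def A ..
  have L4: "AA * ln K = L" unfolding L_def ..
  show ?thesis using gib unfolding lhs L1 L2 A' L4 using B'' L3 by linarith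
qed

end

context slcctx
begin

definition "QBall \<longleftrightarrow> (\<forall>I. I \<subseteq> {..<n} \<longrightarrow> w I > 0 \<longrightarrow> card I + 2 \<le> r \<longrightarrow> QB I)"

lemma Q2full:
  assumes qa: QBall and I: "I \<subseteq> {..<n}" and m: "card I + m = r" "m \<ge> 1"
  shows "2 * W 2 I \<ge> 2 * (real m - 1) * W 1 I - real m * (real m - 1) * W 0 I"
proof (cases "m = 1")
  case True
  then have "W 2 I = 0" using W_big[OF I] m by simp
  then show ?thesis using True by simp
next
  case False
  show ?thesis
  proof (cases "w I = 0")
    case True
    then show ?thesis using W_wzero by simp
  next
    case False': False
    then have "w I > 0" using w_nn[of I] by simp
    moreover have "QB I" using qa \<open>w I > 0\<close> I m False unfolding QBall_def by auto
    ultimately show ?thesis using Q2[OF I m(1)] False m by simp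
  qed
qed

lemma arithA:
  fixes X W1 W2 W0 :: real and m :: nat
  assumes "real (Suc m) * X \<ge> 2 * W2 - (real m - 1) * W1"
    and "2 * W2 \<ge> 2 * real m * W1 - (real m + 1) * real m * W0"
  shows "X \<ge> W1 - real m * W0"
proof -
  have "real (Suc m) * X \<ge> real (Suc m) * (W1 - real m * W0)"
    using assms by (simp add: algebra_simps)
  then show ?thesis by (simp add: mult_le_cancel_left_pos)
qed

lemma A_ind:
  assumes qa: QBall
  shows "I \<subseteq> {..<n} \<Longrightarrow> card I + m = r \<Longrightarrow> W m I \<ge> W 1 I - (real m - 1) * W 0 I"
proof (induction m arbitrary: I)
  case 0
  then have "W 1 I = 0" using W_big by simp
  then show ?case by simp
next
  case (Suc m)
  note I = Suc.prems(1)
  have tw: "(\<Sum>x\<in>R I. W m (insert x I)) = real (Suc m) * W (Suc m) I"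
    using tower[OF I, of "Suc m"] by simp
  have t2: "(\<Sum>x\<in>R I. W 1 (insert x I)) = 2 * W 2 I"
  proof -
    have e: "(2::nat) - 1 = 1" by simp
    show ?thesis using tower[OF I, of 2] unfolding e by simp
  qed
  have t1: "(\<Sum>x\<in>R I. W 0 (insert x I)) = W 1 I"
    using tower[OF I, of 1] by simp
  have ih: "W m (insert x I) \<ge> W 1 (insert x I) - (real m - 1) * W 0 (insert x I)" if x: "x \<in> R I" for x
    using Suc.IH[OF ins_sub[OF I x]] card_ins[OF I x] Suc.prems(2) by simp
  have "(\<Sum>x\<in>R I. W m (insert x I)) \<ge> (\<Sum>x\<in>R I. W 1 (insert x I) - (real m - 1) * W 0 (insert x I))"
    using ih by (intro sum_mono) auto
  also have "(\<Sum>x\<in>R I. W 1 (insert x I) - (real m - 1) * W 0 (insert x I)) = 2 * W 2 I - (real m - 1) * W 1 I"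
    by (simp only: sum_subtractf sum_distrib_left[symmetric] t1 t2)
  finally have h1: "real (Suc m) * W (Suc m) I \<ge> 2 * W 2 I - (real m - 1) * W 1 I" using tw by simp
  have h2: "2 * W 2 I \<ge> 2 * real m * W 1 I - (real m + 1) * real m * W 0 I"
    using Q2full[OF qa I Suc.prems(2)] by (simp add: algebra_simps)
  show ?case using arithA[OF h1 h2] by simp
qed

lemma arithB:
  fixes X Y W1 W0 :: real and m :: nat
  assumes "real m * Y \<le> (real m - 1) * (real m + 1) * X + W1"
    and "X \<ge> W1 - real m * W0" and "m \<ge> 1"
  shows "Y \<le> real m * X + W0"
proof -
  have "(real m - 1) * (real m + 1) * X + W1 \<le> real m * (real m * X + W0)"
    using assms(2) by (simp add: algebra_simps)
  then have "real m * Y \<le> real m * (real m * X + W0)" using assms(1) by linarith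
  then show ?thesis using assms(3) by (simp add: mult_le_cancel_left_pos)
qed

lemma B_ind:
  assumes qa: QBall
  shows "I \<subseteq> {..<n} \<Longrightarrow> card I + m = r \<Longrightarrow> m \<ge> 1 \<Longrightarrow> W (m - 1) I \<le> (real m - 1) * W m I + W 0 I"
proof (induction m arbitrary: I)
  case 0
  then show ?case by simp
next
  case (Suc m)
  note I = Suc.prems(1)
  show ?case
  proof (cases "m = 0")
    case True
    then show ?thesis by simp
  next
    case False
    then have m1: "m \<ge> 1" by simp
    have tw: "(\<Sum>x\<in>R I. W (m - 1) (insert x I)) = real m * W m I"
      using tower[OF I m1] by simp
    have tw2: "(\<Sum>x\<in>R I. W m (insert x I)) = real (Suc m) * W (Suc m) I"
      using tower[OF I, of "Suc m"] by simp
    have t1: "(\<Sum>x\<in>R I. W 0 (insert x I)) = W 1 I"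
      using tower[OF I, of 1] by simp
    have ih: "W (m - 1) (insert x I) \<le> (real m - 1) * W m (insert x I) + W 0 (insert x I)" if x: "x \<in> R I" for x
      using Suc.IH[OF ins_sub[OF I x] _ m1] card_ins[OF I x] Suc.prems(2) by simp
    have "real m * W m I \<le> (\<Sum>x\<in>R I. (real m - 1) * W m (insert x I) + W 0 (insert x I))"
      unfolding tw[symmetric] using ih by (intro sum_mono) auto
    also have "\<dots> = (real m - 1) * (real m + 1) * W (Suc m) I + W 1 I"
      by (simp add: sum.distrib sum_distrib_left[symmetric] tw2 t1)
    finally have h1: "real m * W m I \<le> (real m - 1) * (real m + 1) * W (Suc m) I + W 1 I" .
    have h2: "W (Suc m) I \<ge> W 1 I - real m * W 0 I"
      using A_ind[OF qa I Suc.prems(2)] by simp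
    show ?thesis using arithB[OF h1 h2 m1] by simp
  qed
qed

lemma B_empty:
  assumes qa: QBall and r: "r \<ge> 1"
  shows "W (r - 1) {} \<le> (real r - 1) * W r {} + W 0 {}"
  using B_ind[OF qa, of "{}" r] r by simp

end

context slcctx
begin

definition "P J x = (\<Sum>S\<in>Xs J. \<pi> S * (\<Prod>i\<in>S - J. x i))"
definition "DP i J x = (if i \<in> J then 0 else P (insert i J) x)"
definition "DDP i j J x = (if j \<in> J then 0 else DP i (insert j J) x)"

lemma Xs_fin_S: "S \<in> Xs J \<Longrightarrow> finite S"
  unfolding Xs_def by (auto dest: finite_subset)

lemma prod_upd:
  fixes x :: "nat \<Rightarrow> real"
  assumes "finite S"
  shows "(\<Prod>k\<in>S - J. (x(i := t)) k) = (\<Prod>k\<in>S - J. x k) + (t - x i) * (if i \<in> S \<and> i \<notin> J then (\<Prod>k\<in>S - insert i J. x k) else 0)"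
proof (cases "i \<in> S \<and> i \<notin> J")
  case True
  then have iS: "i \<in> S - J" by simp
  have fin: "finite (S - J)" using assms by simp
  have e: "S - J - {i} = S - insert i J" by auto
  have "(\<Prod>k\<in>S - J. (x(i := t)) k) = (x(i := t)) i * (\<Prod>k\<in>S - J - {i}. (x(i := t)) k)"
    by (rule prod.remove[OF fin iS])
  also have "\<dots> = t * (\<Prod>k\<in>S - J - {i}. (x(i := t)) k)" by simp
  also have "(\<Prod>k\<in>S - J - {i}. (x(i := t)) k) = (\<Prod>k\<in>S - J - {i}. x k)"
    by (intro prod.cong) auto
  finally have 1: "(\<Prod>k\<in>S - J. (x(i := t)) k) = t * (\<Prod>k\<in>S - insert i J. x k)" using e by simp
  have "(\<Prod>k\<in>S - J. x k) = x i * (\<Prod>k\<in>S - J - {i}. x k)"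
    by (rule prod.remove[OF fin iS])
  then have 2: "(\<Prod>k\<in>S - J. x k) = x i * (\<Prod>k\<in>S - insert i J. x k)"
    using e by simp
  show ?thesis unfolding 1 2 using True by (simp add: algebra_simps)
next
  case False
  then have "(\<Prod>k\<in>S - J. (x(i := t)) k) = (\<Prod>k\<in>S - J. x k)"
    by (intro prod.cong) auto
  then show ?thesis using False by auto
qed

lemma P_upd: "P J (x(i := t)) = P J x + (t - x i) * DP i J x"
proof -
  have "P J (x(i := t)) = (\<Sum>S\<in>Xs J. \<pi> S * (\<Prod>k\<in>S - J. x k) + (t - x i) * (if i \<in> S \<and> i \<notin> J then \<pi> S * (\<Prod>k\<in>S - insert i J. x k) else 0))"
    unfolding P_def
  proof (rule sum.cong[OF refl])
    fix S assume S: "S \<in> Xs J"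
    show "\<pi> S * (\<Prod>k\<in>S - J. (x(i := t)) k) = \<pi> S * (\<Prod>k\<in>S - J. x k) + (t - x i) * (if i \<in> S \<and> i \<notin> J then \<pi> S * (\<Prod>k\<in>S - insert i J. x k) else 0)"
      unfolding prod_upd[OF Xs_fin_S[OF S]] by (auto simp: algebra_simps)
  qed
  also have "\<dots> = P J x + (t - x i) * (\<Sum>S\<in>Xs J. if i \<in> S \<and> i \<notin> J then \<pi> S * (\<Prod>k\<in>S - insert i J. x k) else 0)"
    unfolding P_def by (simp add: sum.distrib sum_distrib_left)
  also have "(\<Sum>S\<in>Xs J. if i \<in> S \<and> i \<notin> J then \<pi> S * (\<Prod>k\<in>S - insert i J. x k) else 0) = DP i J x"
  proof (cases "i \<in> J")
    case True then show ?thesis unfolding DP_def by simp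
  next
    case False
    have "(\<Sum>S\<in>Xs J. if i \<in> S \<and> i \<notin> J then \<pi> S * (\<Prod>k\<in>S - insert i J. x k) else 0)
       = (\<Sum>S\<in>{S\<in>Xs J. i \<in> S}. \<pi> S * (\<Prod>k\<in>S - insert i J. x k))"
      using False by (simp add: sum.inter_filter)
    also have "{S\<in>Xs J. i \<in> S} = Xs (insert i J)" unfolding Xs_def by auto
    finally show ?thesis using False unfolding DP_def P_def by simp
  qed
  finally show ?thesis .
qed

lemma DP_upd: "DP j J (x(i := t)) = DP j J x + (t - x i) * DDP i j J x"
  unfolding DDP_def DP_def[of j] using P_upd by (simp add: DP_def)

lemma pdiff_P: "pdiff i (P J) = DP i J"
proof
  fix x
  have "pdiff i (P J) x = deriv (\<lambda>t. P J x + (t - x i) * DP i J x) (x i)"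
    unfolding pdiff_def P_upd ..
  also have "\<dots> = DP i J x"
    by (rule DERIV_imp_deriv) (auto intro!: derivative_eq_intros)
  finally show "pdiff i (P J) x = DP i J x" .
qed

lemma foldr_P: "distinct xs \<Longrightarrow> foldr pdiff xs (P {}) = P (set xs)"
proof (induction xs)
  case Nil then show ?case by simp
next
  case (Cons a xs)
  then have "foldr pdiff (a # xs) (P {}) = pdiff a (P (set xs))" by simp
  also have "\<dots> = DP a (set xs)" by (rule pdiff_P)
  also have "\<dots> = P (set (a # xs))" using Cons.prems unfolding DP_def by (auto simp: fun_eq_iff)
  finally show ?case .
qed

lemma gen_P: "gen_poly n \<pi> = P {}"
  unfolding gen_poly_def P_def Xs_def by (auto simp: fun_eq_iff Pow_def)

lemma pdiff_set_P: "finite I \<Longrightarrow> pdiff_set I (gen_poly n \<pi>) = P I"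
  unfolding pdiff_set_def gen_P using foldr_P[of "sorted_list_of_set I"] by simp

lemma P_one: "P J (\<lambda>_. 1) = w J"
  unfolding P_def w_def by simp

lemma DP_one: "DP i J (\<lambda>_. 1) = (if i \<in> J then 0 else w (insert i J))"
  unfolding DP_def P_one by simp

lemma DP_one_le: "DP i J (\<lambda>_. 1) \<le> w J" "DP i J (\<lambda>_. 1) \<ge> 0"
  unfolding DP_one by (auto intro: w_mono w_nn)

lemma pdiff_lnP:
  assumes "P J y > 0"
  shows "pdiff j (\<lambda>y. ln (P J y)) y = DP j J y / P J y"
proof -
  have "pdiff j (\<lambda>y. ln (P J y)) y = deriv (\<lambda>t. ln (P J y + (t - y j) * DP j J y)) (y j)"
    unfolding pdiff_def P_upd ..
  also have "\<dots> = DP j J y / P J y"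
    by (rule DERIV_imp_deriv) (use assms in \<open>auto intro!: derivative_eq_intros\<close>)
  finally show ?thesis .
qed

lemma hess:
  assumes wI: "w I > 0"
  shows "pdiff i (pdiff j (\<lambda>y. ln (P I y))) (\<lambda>_. 1)
     = (DDP i j I (\<lambda>_. 1) * w I - DP j I (\<lambda>_. 1) * DP i I (\<lambda>_. 1)) / (w I)^2"
proof -
  define one :: "nat \<Rightarrow> real" where "one = (\<lambda>_. 1)"
  define a where "a = DP j I one"
  define b where "b = DDP i j I one"
  define d where "d = DP i I one"
  have d: "0 \<le> d" "d \<le> w I" unfolding d_def one_def using DP_one_le by auto
  have Ppos: "P I (one(i := t)) > 0" if "t > 0" for t
  proof -
    have "P I (one(i := t)) = (w I - d) + t * d" unfolding P_upd d_def using P_one[of I]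
      by (simp add: one_def algebra_simps)
    moreover have "(w I - d) + t * d > 0"
    proof (cases "d = 0")
      case True then show ?thesis using wI by simp
    next
      case False then have "t * d > 0" using d that by simp
      then show ?thesis using d by simp
    qed
    ultimately show ?thesis by simp
  qed
  have ev: "eventually (\<lambda>t. pdiff j (\<lambda>y. ln (P I y)) (one(i := t)) = (a + (t - 1) * b) / (w I + (t - 1) * d)) (nhds 1)"
  proof -
    have "eventually (\<lambda>t. t \<in> {0<..}) (nhds (1::real))"
      by (rule eventually_nhds_in_open) auto
    then show ?thesis
    proof (rule eventually_mono)
      fix t :: real assume "t \<in> {0<..}"
      then have "P I (one(i := t)) > 0" using Ppos by simp
      then have "pdiff j (\<lambda>y. ln (P I y)) (one(i := t)) = DP j I (one(i := t)) / P I (one(i := t))"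
        by (rule pdiff_lnP)
      also have "\<dots> = (a + (t - 1) * b) / (w I + (t - 1) * d)"
        unfolding DP_upd P_upd a_def b_def d_def by (simp add: one_def P_one)
      finally show "pdiff j (\<lambda>y. ln (P I y)) (one(i := t)) = (a + (t - 1) * b) / (w I + (t - 1) * d)" .
    qed
  qed
  have "pdiff i (pdiff j (\<lambda>y. ln (P I y))) one = deriv (\<lambda>t. pdiff j (\<lambda>y. ln (P I y)) (one(i := t))) 1"
    unfolding pdiff_def[of i] by (simp add: one_def)
  also have "\<dots> = deriv (\<lambda>t. (a + (t - 1) * b) / (w I + (t - 1) * d)) 1"
    by (rule deriv_cong_ev[OF ev refl])
  also have "\<dots> = (b * w I - a * d) / (w I)^2"
    by (rule DERIV_imp_deriv) (use wI in \<open>auto intro!: derivative_eq_intros simp: power2_eq_square algebra_simps\<close>)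
  finally show ?thesis unfolding a_def b_def d_def one_def .
qed

end

lemma decomp:
  fixes H :: "nat \<Rightarrow> nat \<Rightarrow> real" and s :: "nat \<Rightarrow> real" and A :: "nat set"
  assumes fin: "finite A"
    and hyp: "\<And>v. (\<Sum>i\<in>A. \<Sum>j\<in>A. v i * H i j * v j) \<le> (\<Sum>i\<in>A. s i * v i)^2 / G"
    and G: "G > 0" and sym: "\<And>i j. H i j = H j i"
    and row: "\<And>i. i \<in> A \<Longrightarrow> (\<Sum>j\<in>A. H i j) = c * s i"
    and tot: "(\<Sum>i\<in>A. s i) = mm * G" and mm: "mm > 0"
  shows "(\<Sum>i\<in>A. \<Sum>j\<in>A. v i * H i j * v j) \<le> c * (\<Sum>i\<in>A. s i * v i)^2 / (mm * G)"
proof -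
  define t where "t = (\<Sum>i\<in>A. s i * v i) / (mm * G)"
  define z where "z i = v i - t" for i
  have sz: "(\<Sum>i\<in>A. s i * z i) = 0"
  proof -
    have "(\<Sum>i\<in>A. s i * z i) = (\<Sum>i\<in>A. s i * v i) - t * (\<Sum>i\<in>A. s i)"
      unfolding z_def by (simp add: algebra_simps sum_subtractf sum_distrib_left)
    also have "\<dots> = 0" unfolding tot t_def using G mm by simp
    finally show ?thesis .
  qed
  have zHz: "(\<Sum>i\<in>A. \<Sum>j\<in>A. z i * H i j * z j) \<le> 0"
    using hyp[of z] unfolding sz by simp
  have tmx: "v i * H i j * v j = t * t * H i j + t * (H i j * z j) + t * (z i * H i j) + z i * H i j * z j" for i j
    unfolding z_def by (simp add: algebra_simps)
  have expand: "(\<Sum>i\<in>A. \<Sum>j\<in>A. v i * H i j * v j) =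
     t * t * (\<Sum>i\<in>A. \<Sum>j\<in>A. H i j) + t * (\<Sum>i\<in>A. \<Sum>j\<in>A. H i j * z j)
     + t * (\<Sum>i\<in>A. \<Sum>j\<in>A. z i * H i j) + (\<Sum>i\<in>A. \<Sum>j\<in>A. z i * H i j * z j)"
    unfolding tmx by (simp add: sum.distrib sum_distrib_left)
  have e1: "(\<Sum>i\<in>A. \<Sum>j\<in>A. H i j) = c * (mm * G)"
    using row by (simp add: sum_distrib_left[symmetric] tot)
  have e2: "(\<Sum>i\<in>A. \<Sum>j\<in>A. H i j * z j) = 0"
  proof -
    have "(\<Sum>i\<in>A. \<Sum>j\<in>A. H i j * z j) = (\<Sum>j\<in>A. \<Sum>i\<in>A. H j i * z j)"
      by (subst sum.swap) (simp add: sym)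
    also have "\<dots> = (\<Sum>j\<in>A. (\<Sum>i\<in>A. H j i) * z j)"
      by (simp add: sum_distrib_right)
    also have "\<dots> = (\<Sum>j\<in>A. c * (s j * z j))"
      using row by (intro sum.cong refl) simp
    also have "\<dots> = 0" using sz by (simp add: sum_distrib_left[symmetric])
    finally show ?thesis .
  qed
  have e3: "(\<Sum>i\<in>A. \<Sum>j\<in>A. z i * H i j) = 0"
  proof -
    have "(\<Sum>i\<in>A. \<Sum>j\<in>A. z i * H i j) = (\<Sum>i\<in>A. z i * (\<Sum>j\<in>A. H i j))"
      by (simp add: sum_distrib_left)
    also have "\<dots> = (\<Sum>i\<in>A. c * (s i * z i))"
      using row by (intro sum.cong refl) simp
    also have "\<dots> = 0" using sz by (simp add: sum_distrib_left[symmetric])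
    finally show ?thesis .
  qed
  have "(\<Sum>i\<in>A. \<Sum>j\<in>A. v i * H i j * v j) \<le> t * t * (c * (mm * G))"
    using expand e1 e2 e3 zHz by simp
  also have "\<dots> = c * (\<Sum>i\<in>A. s i * v i)^2 / (mm * G)"
    unfolding t_def using G mm by (simp add: power2_eq_square field_simps)
  finally show ?thesis .
qed

context slcctx
begin

lemma H_val: "DDP i j I (\<lambda>_. 1) = (if i \<in> I \<or> j \<in> I \<or> i = j then 0 else w (insert i (insert j I)))"
  unfolding DDP_def DP_one by auto

lemma H_sym: "DDP i j I (\<lambda>_. 1) = DDP j i I (\<lambda>_. 1)"
  unfolding H_val by (auto simp: insert_commute)

lemma QB_from_slc:
  assumes slc: "strongly_log_concave n (gen_poly n \<pi>)"
    and I: "I \<subseteq> {..<n}" and wI: "w I > 0" and crd: "card I + 2 \<le> r"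
  shows "QB I"
proof -
  define m where "m = r - card I"
  have m2: "m \<ge> 2" and rm: "real (r - card I) = real m" using crd unfolding m_def by auto
  have finI: "finite I" using I finite_subset by blast
  define H where "H i j = DDP i j I (\<lambda>_. 1)" for i j
  define s where "s i = DP i I (\<lambda>_. 1)" for i
  define G where "G = w I"
  have G: "G > 0" unfolding G_def by (rule wI)
  have lc0: "log_concave_at n (pdiff_set I (gen_poly n \<pi>)) (\<lambda>_. 1)"
    using slc I unfolding strongly_log_concave_def by simp
  have lc: "log_concave_at n (P I) (\<lambda>_. 1)"
    using lc0 unfolding pdiff_set_P[OF finI] .
  have hyp: "(\<Sum>i\<in>{..<n}. \<Sum>j\<in>{..<n}. v i * H i j * v j) \<le> (\<Sum>i\<in>{..<n}. s i * v i)^2 / G" for v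
  proof -
    have le: "(\<Sum>i<n. \<Sum>j<n. v i * ((H i j * G - s j * s i) / G^2) * v j) \<le> 0"
      using lc unfolding log_concave_at_def hess[OF wI] H_def s_def G_def by blast
    have tm: "v i * ((H i j * G - s j * s i) / G^2) * v j = (v i * H i j * v j) / G - ((s i * v i) * (s j * v j)) / G^2" for i j
      using G by (simp add: field_simps power2_eq_square)
    have "(\<Sum>i<n. \<Sum>j<n. v i * ((H i j * G - s j * s i) / G^2) * v j)
       = (\<Sum>i<n. \<Sum>j<n. v i * H i j * v j) / G - (\<Sum>i<n. s i * v i)^2 / G^2"
      unfolding tm by (simp add: sum_subtractf sum_divide_distrib power2_eq_square sum_product)
    then have "(\<Sum>i<n. \<Sum>j<n. v i * H i j * v j) / G \<le> (\<Sum>i<n. s i * v i)^2 / G^2"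
      using le by simp
    then have "G * ((\<Sum>i<n. \<Sum>j<n. v i * H i j * v j) / G) \<le> G * ((\<Sum>i<n. s i * v i)^2 / G^2)"
      using G by (intro mult_left_mono) auto
    then show ?thesis using G by (simp add: power2_eq_square)
  qed
  have row: "(\<Sum>j\<in>{..<n}. H i j) = (real m - 1) * s i" if i: "i \<in> {..<n}" for i
  proof (cases "i \<in> I")
    case True
    then show ?thesis unfolding H_def s_def H_val DP_one by simp
  next
    case False
    then have iR: "i \<in> R I" using i unfolding R_def by simp
    have "(\<Sum>j\<in>{..<n}. H i j) = (\<Sum>j\<in>R (insert i I). w (insert j (insert i I)))"
    proof (rule sum.mono_neutral_cong_right)
      show "R (insert i I) \<subseteq> {..<n}" unfolding R_def by auto
      show "\<forall>j\<in>{..<n} - R (insert i I). H i j = 0" unfolding H_def H_val R_def by auto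
      show "\<And>j. j \<in> R (insert i I) \<Longrightarrow> H i j = w (insert j (insert i I))"
        unfolding H_def H_val R_def using False by (auto simp: insert_commute)
    qed simp
    also have "\<dots> = real (r - card (insert i I)) * w (insert i I)"
      using dc_w[OF ins_sub[OF I iR]] card_ins[OF I iR] crd by simp
    also have "\<dots> = (real m - 1) * s i"
      unfolding s_def DP_one using card_ins[OF I iR] False crd unfolding m_def by (simp add: of_nat_diff)
    finally show ?thesis .
  qed
  have sR: "(\<Sum>i\<in>{..<n}. s i * u i) = (\<Sum>x\<in>R I. w (insert x I) * u x)" for u
  proof (rule sum.mono_neutral_cong_right)
    show "R I \<subseteq> {..<n}" unfolding R_def by auto
    show "\<forall>i\<in>{..<n} - R I. s i * u i = 0" unfolding s_def DP_one R_def by auto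
    show "\<And>x. x \<in> R I \<Longrightarrow> s x * u x = w (insert x I) * u x" unfolding s_def DP_one R_def by auto
  qed simp
  have tot: "(\<Sum>i\<in>{..<n}. s i) = real m * G"
    using sR[of "\<lambda>_. 1"] dc_w[OF I] crd unfolding G_def m_def by simp
  have dec: "(\<Sum>i\<in>{..<n}. \<Sum>j\<in>{..<n}. v i * H i j * v j) \<le> (real m - 1) * (\<Sum>i\<in>{..<n}. s i * v i)^2 / (real m * G)" for v
    by (rule decomp[OF _ hyp G _ row tot]) (use m2 H_sym H_def in auto)
  have HR: "(\<Sum>i\<in>{..<n}. \<Sum>j\<in>{..<n}. u i * H i j * u j) = (\<Sum>x\<in>R I. \<Sum>y\<in>R I - {x}. w (insert y (insert x I)) * u x * u y)" for u
  proof (rule sum.mono_neutral_cong_right)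
    show "R I \<subseteq> {..<n}" unfolding R_def by auto
    show "\<forall>i\<in>{..<n} - R I. (\<Sum>j\<in>{..<n}. u i * H i j * u j) = 0" unfolding H_def H_val R_def by auto
    show "(\<Sum>j\<in>{..<n}. u x * H x j * u j) = (\<Sum>y\<in>R I - {x}. w (insert y (insert x I)) * u x * u y)"
      if x: "x \<in> R I" for x
    proof (rule sum.mono_neutral_cong_right)
      show "R I - {x} \<subseteq> {..<n}" unfolding R_def by auto
      show "\<forall>j\<in>{..<n} - (R I - {x}). u x * H x j * u j = 0" unfolding H_def H_val R_def by auto
      show "\<And>y. y \<in> R I - {x} \<Longrightarrow> u x * H x y * u y = w (insert y (insert x I)) * u x * u y"
        unfolding H_def H_val R_def using x by (auto simp: insert_commute R_def)
    qed simp
  qed simp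
  show ?thesis unfolding QB_def
  proof
    fix u
    show "(\<Sum>x\<in>R I. \<Sum>y\<in>R I - {x}. w (insert y (insert x I)) * u x * u y)
       \<le> (real (r - card I) - 1) / (real (r - card I) * w I) * (\<Sum>x\<in>R I. w (insert x I) * u x)\<^sup>2"
      using dec[of u] unfolding HR sR rm G_def by simp
  qed
qed

lemma QBall_from_slc:
  assumes "strongly_log_concave n (gen_poly n \<pi>)"
  shows QBall
  unfolding QBall_def using QB_from_slc[OF assms] by blast

end

context slcctx
begin

lemma supp_sub: "support \<pi> \<subseteq> Pow {..<n}"
proof
  fix x assume "x \<in> support \<pi>"
  then have "\<pi> x \<noteq> 0" unfolding support_def by simp
  then show "x \<in> Pow {..<n}" using pi_sub by auto
qed

lemma supp_card: "x \<in> support \<pi> \<Longrightarrow> card x = r"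
  unfolding support_def using pi_card by auto

lemma fin_supp[simp]: "finite (support \<pi>)"
  using supp_sub finite_subset by blast

lemma sum_supp: "(\<Sum>y\<in>{y\<in>support \<pi>. T \<subseteq> y}. \<pi> y * g y) = (\<Sum>S\<in>Xs T. \<pi> S * g S)"
proof (rule sum.mono_neutral_left)
  show "{y \<in> support \<pi>. T \<subseteq> y} \<subseteq> Xs T" using supp_sub unfolding Xs_def by auto
  show "\<forall>i\<in>Xs T - {y \<in> support \<pi>. T \<subseteq> y}. \<pi> i * g i = 0"
    unfolding Xs_def support_def using pi_pos by fastforce
qed simp

lemma sum_supp_all: "(\<Sum>y\<in>support \<pi>. \<pi> y * g y) = (\<Sum>S\<in>Xs {}. \<pi> S * g S)"
  using sum_supp[where T="{}" and g=g] by simp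

lemma w_empty: "w {} = 1"
  using dist unfolding is_distribution_def w_def Xs_def by (simp add: Pow_def)

lemma jensen:
  assumes wT: "w T > 0"
  shows "(\<Sum>y\<in>{y\<in>support \<pi>. T \<subseteq> y}. \<pi> y * ln (f y)) \<le> w T * ln (F T)"
proof -
  define K where "K = F T"
  have K: "K > 0" unfolding K_def using F_pos[OF wT] .
  define Y where "Y = {y\<in>support \<pi>. T \<subseteq> y}"
  have "(\<Sum>y\<in>Y. \<pi> y * ln (f y)) \<le> (\<Sum>y\<in>Y. \<pi> y * (ln K + f y / K - 1))"
  proof (rule sum_mono)
    fix y assume "y \<in> Y"
    then have py: "\<pi> y > 0" and fy: "f y > 0" unfolding Y_def support_def using fpos by auto
    have "ln (f y / K) \<le> f y / K - 1" using fy K by (intro ln_le_minus_one) simp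
    then have "ln (f y) \<le> ln K + f y / K - 1" using fy K by (simp add: ln_div)
    then show "\<pi> y * ln (f y) \<le> \<pi> y * (ln K + f y / K - 1)" using py by (intro mult_left_mono) auto
  qed
  also have "(\<Sum>y\<in>Y. \<pi> y * (ln K + f y / K - 1)) = (\<Sum>y\<in>Y. \<pi> y * 1) * ln K + (\<Sum>y\<in>Y. \<pi> y * f y) / K - (\<Sum>y\<in>Y. \<pi> y * 1)"
    by (simp add: algebra_simps sum.distrib sum_subtractf sum_distrib_left sum_distrib_right sum_divide_distrib)
  also have "\<dots> = w T * ln K + M T / K - w T"
    unfolding Y_def sum_supp w_def M_def by simp
  also have "M T / K = w T" unfolding K_def F_def using wT w_pos_M[OF wT] by simp
  finally show ?thesis unfolding Y_def K_def by simp
qed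

lemma bx_val:
  assumes x: "x \<in> support \<pi>" and y: "y \<in> support \<pi>"
  shows "bx_walk \<pi> x y = (\<Sum>i\<in>x. if x - {i} \<subseteq> y then \<pi> y / w (x - {i}) else 0) / real r"
proof -
  have cx: "card x = r" using x by (rule supp_card)
  have Z: "(\<Sum>C\<in>{C\<in>support \<pi>. x - {i} \<subseteq> C}. \<pi> C) = w (x - {i})" for i
    using sum_supp[where T="x - {i}" and g="\<lambda>_. 1"] unfolding w_def by simp
  show ?thesis unfolding bx_walk_def Z cx using y by simp
qed

lemma w_del_pos:
  assumes x: "x \<in> support \<pi>"
  shows "w (x - {i}) > 0"
proof -
  have "x \<in> Xs (x - {i})" using x supp_sub unfolding Xs_def by auto
  then have "\<pi> x \<le> w (x - {i})" unfolding w_def by (intro member_le_sum) (auto simp: pi_nn)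
  moreover have "\<pi> x > 0" using x unfolding support_def by simp
  ultimately show ?thesis by simp
qed

lemma per_x:
  assumes x: "x \<in> support \<pi>"
  shows "(\<Sum>y\<in>support \<pi>. bx_walk \<pi> x y * ln (f y)) \<le> (\<Sum>i\<in>x. ln (F (x - {i}))) / real r"
proof -
  have step1: "bx_walk \<pi> x y * ln (f y) = (\<Sum>i\<in>x. (if x - {i} \<subseteq> y then \<pi> y * ln (f y) / w (x - {i}) else 0)) / real r"
    if y: "y \<in> support \<pi>" for y
  proof -
    have "bx_walk \<pi> x y * ln (f y) = (\<Sum>i\<in>x. (if x - {i} \<subseteq> y then \<pi> y / w (x - {i}) else 0) * ln (f y)) / real r"
      unfolding bx_val[OF x y] by (simp add: sum_distrib_right)
    also have "(\<Sum>i\<in>x. (if x - {i} \<subseteq> y then \<pi> y / w (x - {i}) else 0) * ln (f y))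
       = (\<Sum>i\<in>x. (if x - {i} \<subseteq> y then \<pi> y * ln (f y) / w (x - {i}) else 0))"
      by (intro sum.cong refl) simp
    finally show ?thesis .
  qed
  have "(\<Sum>y\<in>support \<pi>. bx_walk \<pi> x y * ln (f y))
      = (\<Sum>y\<in>support \<pi>. \<Sum>i\<in>x. (if x - {i} \<subseteq> y then \<pi> y * ln (f y) / w (x - {i}) else 0)) / real r"
    using step1 by (simp add: sum_divide_distrib)
  also have "(\<Sum>y\<in>support \<pi>. \<Sum>i\<in>x. (if x - {i} \<subseteq> y then \<pi> y * ln (f y) / w (x - {i}) else 0))
      = (\<Sum>i\<in>x. \<Sum>y\<in>support \<pi>. (if x - {i} \<subseteq> y then \<pi> y * ln (f y) / w (x - {i}) else 0))"
    by (rule sum.swap)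
  also have "\<dots> = (\<Sum>i\<in>x. (\<Sum>y\<in>{y\<in>support \<pi>. x - {i} \<subseteq> y}. \<pi> y * ln (f y)) / w (x - {i}))"
    by (intro sum.cong refl) (simp add: sum.inter_filter[symmetric] sum_divide_distrib)
  also have "\<dots> \<le> (\<Sum>i\<in>x. ln (F (x - {i})))"
  proof (rule sum_mono)
    fix i assume "i \<in> x"
    have wp: "w (x - {i}) > 0" by (rule w_del_pos[OF x])
    have "(\<Sum>y\<in>{y\<in>support \<pi>. x - {i} \<subseteq> y}. \<pi> y * ln (f y)) / w (x - {i}) \<le> (w (x - {i}) * ln (F (x - {i}))) / w (x - {i})"
      using jensen[OF wp] wp by (intro divide_right_mono) auto
    then show "(\<Sum>y\<in>{y\<in>support \<pi>. x - {i} \<subseteq> y}. \<pi> y * ln (f y)) / w (x - {i}) \<le> ln (F (x - {i}))"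
      using wp by simp
  qed
  finally show ?thesis by (simp add: divide_right_mono)
qed

lemma img_del:
  assumes S: "S \<subseteq> {..<n}" "card S = r" and r: "r \<ge> 1"
  shows "{T\<in>Ys (r - 1) {}. T \<subseteq> S} = (\<lambda>i. S - {i}) ` S"
proof
  have finS: "finite S" using S(1) finite_subset by blast
  show "(\<lambda>i. S - {i}) ` S \<subseteq> {T\<in>Ys (r - 1) {}. T \<subseteq> S}"
    using S finS unfolding Ys_def by auto
  show "{T\<in>Ys (r - 1) {}. T \<subseteq> S} \<subseteq> (\<lambda>i. S - {i}) ` S"
  proof
    fix T assume T: "T \<in> {T\<in>Ys (r - 1) {}. T \<subseteq> S}"
    then have TS: "T \<subseteq> S" and cT: "card T = r - 1" unfolding Ys_def by auto
    have "\<not> S \<subseteq> T"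
    proof
      assume "S \<subseteq> T"
      then have "card S \<le> card T" using finS TS card_mono finite_subset by metis
      then show False using cT S r by simp
    qed
    then obtain i where i: "i \<in> S" "i \<notin> T" by blast
    have "T \<subseteq> S - {i}" using TS i by auto
    moreover have "card (S - {i}) = card T" using cT S i finS by simp
    ultimately have "T = S - {i}" using card_subset_eq[of "S - {i}" T] finS by auto
    then show "T \<in> (\<lambda>i. S - {i}) ` S" using i by blast
  qed
qed

lemma count:
  assumes r: "r \<ge> 1"
  shows "(\<Sum>x\<in>support \<pi>. \<Sum>i\<in>x. \<pi> x * f x * ln (F (x - {i}))) = W (r - 1) {}"
proof -
  have "W (r - 1) {} = (\<Sum>T\<in>Ys (r - 1) {}. \<Sum>S\<in>Xs T. \<pi> S * f S * ln (F T))"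
    unfolding W_def psiF M_def by (simp add: sum_distrib_right)
  also have "\<dots> = (\<Sum>T\<in>Ys (r - 1) {}. \<Sum>S\<in>{S\<in>Pow {..<n}. T \<subseteq> S}. \<pi> S * f S * ln (F T))"
    unfolding Xs_def ..
  also have "\<dots> = (\<Sum>S\<in>Pow {..<n}. \<Sum>T\<in>{T\<in>Ys (r - 1) {}. T \<subseteq> S}. \<pi> S * f S * ln (F T))"
    by (rule sum.swap_restrict) auto
  also have "\<dots> = (\<Sum>S\<in>support \<pi>. \<Sum>T\<in>{T\<in>Ys (r - 1) {}. T \<subseteq> S}. \<pi> S * f S * ln (F T))"
  proof (rule sum.mono_neutral_right)
    show "support \<pi> \<subseteq> Pow {..<n}" by (rule supp_sub)
    show "\<forall>S\<in>Pow {..<n} - support \<pi>. (\<Sum>T\<in>{T\<in>Ys (r - 1) {}. T \<subseteq> S}. \<pi> S * f S * ln (F T)) = 0"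
    proof
      fix S assume "S \<in> Pow {..<n} - support \<pi>"
      then have "\<pi> S = 0" using pi_pos unfolding support_def by force
      then show "(\<Sum>T\<in>{T\<in>Ys (r - 1) {}. T \<subseteq> S}. \<pi> S * f S * ln (F T)) = 0" by simp
    qed
  qed simp
  also have "\<dots> = (\<Sum>S\<in>support \<pi>. \<Sum>i\<in>S. \<pi> S * f S * ln (F (S - {i})))"
  proof (rule sum.cong[OF refl])
    fix S assume S: "S \<in> support \<pi>"
    then have Sn: "S \<subseteq> {..<n}" and cS: "card S = r" using supp_sub supp_card by auto
    have finS: "finite S" using Sn finite_subset by blast
    have inj: "inj_on (\<lambda>i. S - {i}) S" unfolding inj_on_def by blast
    show "(\<Sum>T\<in>{T\<in>Ys (r - 1) {}. T \<subseteq> S}. \<pi> S * f S * ln (F T)) = (\<Sum>i\<in>S. \<pi> S * f S * ln (F (S - {i})))"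
      unfolding img_del[OF Sn cS r] using sum.reindex[OF inj] by (simp add: comp_def)
  qed
  finally show ?thesis by simp
qed

lemma cross:
  assumes r: "r \<ge> 1"
  shows "(\<Sum>x\<in>support \<pi>. \<Sum>y\<in>support \<pi>. \<pi> x * f x * bx_walk \<pi> x y * ln (f y)) \<le> W (r - 1) {} / real r"
proof -
  have "(\<Sum>x\<in>support \<pi>. \<Sum>y\<in>support \<pi>. \<pi> x * f x * bx_walk \<pi> x y * ln (f y))
      = (\<Sum>x\<in>support \<pi>. \<pi> x * f x * (\<Sum>y\<in>support \<pi>. bx_walk \<pi> x y * ln (f y)))"
    by (simp add: sum_distrib_left mult.assoc)
  also have "\<dots> \<le> (\<Sum>x\<in>support \<pi>. \<pi> x * f x * ((\<Sum>i\<in>x. ln (F (x - {i}))) / real r))"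
    using per_x term_nn by (intro sum_mono mult_left_mono) auto
  also have "\<dots> = (\<Sum>x\<in>support \<pi>. \<Sum>i\<in>x. \<pi> x * f x * ln (F (x - {i}))) / real r"
    by (simp add: sum_divide_distrib sum_distrib_left)
  also have "\<dots> = W (r - 1) {} / real r" unfolding count[OF r] ..
  finally show ?thesis .
qed

lemma top:
  assumes J: "J \<subseteq> {..<n}" "card J = r"
  shows "(\<Sum>S\<in>Xs J. \<pi> S * g S) = \<pi> J * g J"
proof -
  have "(\<Sum>S\<in>Xs J. \<pi> S * g S) = (\<Sum>S\<in>{J}. \<pi> S * g S)"
  proof (rule sum.mono_neutral_right)
    show "{J} \<subseteq> Xs J" using J unfolding Xs_def by auto
    show "\<forall>S\<in>Xs J - {J}. \<pi> S * g S = 0"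
    proof
      fix S assume S: "S \<in> Xs J - {J}"
      show "\<pi> S * g S = 0"
      proof (cases "\<pi> S = 0")
        case False
        then have "card S = r" "S \<subseteq> {..<n}" using pi_card pi_sub by auto
        moreover have "J \<subseteq> S" using S unfolding Xs_def by auto
        moreover have "finite S" using \<open>S \<subseteq> {..<n}\<close> finite_subset by blast
        ultimately have "J = S" using card_subset_eq[of S J] J by auto
        then show ?thesis using S by simp
      qed simp
    qed
  qed simp
  then show ?thesis by simp
qed

lemma psi_top:
  assumes J: "J \<subseteq> {..<n}" "card J = r"
  shows "psi J = \<pi> J * (f J * ln (f J))"
proof -
  have w: "w J = \<pi> J" using top[OF J, of "\<lambda>_. 1"] unfolding w_def by simp
  have M: "M J = \<pi> J * f J" using top[OF J, of f] unfolding M_def by simp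
  show ?thesis
  proof (cases "\<pi> J = 0")
    case False
    then show ?thesis unfolding psi_def w M by simp
  qed (simp add: psi_def w M)
qed

lemma Wr: "W r {} = (\<Sum>x\<in>support \<pi>. \<pi> x * (f x * ln (f x)))"
proof -
  have "W r {} = (\<Sum>J\<in>Ys r {}. \<pi> J * (f J * ln (f J)))"
    unfolding W_def by (intro sum.cong refl) (auto simp: Ys_def psi_top)
  also have "\<dots> = (\<Sum>x\<in>support \<pi>. \<pi> x * (f x * ln (f x)))"
  proof (rule sum.mono_neutral_right)
    show "support \<pi> \<subseteq> Ys r {}" unfolding Ys_def using supp_sub supp_card by auto
    show "\<forall>x\<in>Ys r {} - support \<pi>. \<pi> x * (f x * ln (f x)) = 0"
    proof
      fix S assume "S \<in> Ys r {} - support \<pi>"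
      then have "\<pi> S = 0" using pi_pos unfolding support_def by force
      then show "\<pi> S * (f S * ln (f S)) = 0" by simp
    qed
  qed simp
  finally show ?thesis .
qed

lemma Msupp: "(\<Sum>x\<in>support \<pi>. \<pi> x * f x) = M {}"
  unfolding sum_supp_all M_def ..

lemma W0e: "W 0 {} = M {} * ln (M {})"
  using W0[of "{}"] unfolding psi_def w_empty by simp

lemma ent_eq: "entropy (support \<pi>) \<pi> f = W r {} - W 0 {}"
  unfolding entropy_def Wr Msupp W0e ..

lemma ent_nn: "entropy (support \<pi>) \<pi> f \<ge> 0"
proof -
  define K where "K = M {}"
  have K: "K > 0" unfolding K_def using w_pos_M w_empty by simp
  have "(\<Sum>x\<in>support \<pi>. \<pi> x * f x * ln (f x / 1)) \<ge> (\<Sum>x\<in>support \<pi>. \<pi> x * f x * ln K + \<pi> x * f x - \<pi> x * 1 * K)"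
  proof (rule sum_mono)
    fix x assume "x \<in> support \<pi>"
    then have "\<pi> x > 0" "f x > 0" unfolding support_def using fpos by auto
    then show "\<pi> x * f x * ln K + \<pi> x * f x - \<pi> x * 1 * K \<le> \<pi> x * f x * ln (f x / 1)"
      by (intro gibbs_term K) (auto simp: pi_nn)
  qed
  also have "(\<Sum>x\<in>support \<pi>. \<pi> x * f x * ln K + \<pi> x * f x - \<pi> x * 1 * K)
      = (\<Sum>x\<in>support \<pi>. \<pi> x * f x) * ln K + (\<Sum>x\<in>support \<pi>. \<pi> x * f x) - (\<Sum>x\<in>support \<pi>. \<pi> x * 1) * K"
    by (simp add: sum.distrib sum_subtractf sum_distrib_right)
  also have "\<dots> = K * ln K"
    unfolding Msupp sum_supp_all using w_empty unfolding w_def K_def by simp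
  finally have ge: "(\<Sum>x\<in>support \<pi>. \<pi> x * f x * ln (f x / 1)) \<ge> K * ln K" .
  have "(\<Sum>x\<in>support \<pi>. \<pi> x * f x * ln (f x / 1)) = (\<Sum>x\<in>support \<pi>. \<pi> x * (f x * ln (f x)))"
    by (rule sum.cong[OF refl]) (simp only: mult.assoc div_by_1)
  with ge have "(\<Sum>x\<in>support \<pi>. \<pi> x * (f x * ln (f x))) \<ge> K * ln K" by simp
  then show ?thesis unfolding entropy_def Msupp K_def by simp
qed

lemma dir_eq:
  "dirichlet_form (support \<pi>) \<pi> (bx_walk \<pi>) f (\<lambda>x. ln (f x))
     = W r {} - (\<Sum>x\<in>support \<pi>. \<Sum>y\<in>support \<pi>. \<pi> x * f x * bx_walk \<pi> x y * ln (f y))"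
proof -
  have t: "\<pi> x * f x * ((if x = y then 1 else 0) - bx_walk \<pi> x y) * ln (f y)
     = (if x = y then \<pi> x * f x * ln (f y) else 0) - \<pi> x * f x * bx_walk \<pi> x y * ln (f y)" for x y
    by (simp add: algebra_simps)
  have d: "(\<Sum>y\<in>support \<pi>. if x = y then \<pi> x * f x * ln (f y) else 0) = \<pi> x * (f x * ln (f x))"
    if "x \<in> support \<pi>" for x
    using that by (simp add: mult.assoc)
  have dd: "(\<Sum>x\<in>support \<pi>. \<Sum>y\<in>support \<pi>. if x = y then \<pi> x * f x * ln (f y) else 0) = W r {}"
    unfolding Wr by (rule sum.cong[OF refl]) (rule d)
  show ?thesis
    unfolding dirichlet_form_def t sum_subtractf dd ..
qed

end

theorem theorem1p1_aux:
  fixes n r :: nat and \<pi> :: "nat set \<Rightarrow> real"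
  assumes "r \<ge> 2"
    and "is_distribution n \<pi>"
    and "homogeneous r \<pi>"
    and "strongly_log_concave n (gen_poly n \<pi>)"
  shows "mlsi_const (support \<pi>) \<pi> (bx_walk \<pi>) \<ge> ereal (1 / real r)"
proof -
  have main: "ereal (1 / real r) \<le> ereal (dirichlet_form (support \<pi>) \<pi> (bx_walk \<pi>) f (\<lambda>x. ln (f x)) / entropy (support \<pi>) \<pi> f)"
    if f: "\<forall>x\<in>support \<pi>. f x > 0" "entropy (support \<pi>) \<pi> f \<noteq> 0" for f
  proof -
    interpret slcctx n r \<pi> f
      using assms(2,3) f(1) by unfold_locales (auto simp: support_def)
    have qa: QBall by (rule QBall_from_slc[OF assms(4)])
    have r1: "r \<ge> 1" using assms(1) by simp
    have B: "W (r - 1) {} \<le> (real r - 1) * W r {} + W 0 {}" using B_empty[OF qa r1] .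
    define D where "D = dirichlet_form (support \<pi>) \<pi> (bx_walk \<pi>) f (\<lambda>x. ln (f x))"
    define E where "E = entropy (support \<pi>) \<pi> f"
    have D: "D \<ge> W r {} - W (r - 1) {} / real r"
      unfolding D_def dir_eq using cross[OF r1] by simp
    have rpos: "real r > 0" using r1 by simp
    have "W (r - 1) {} / real r \<le> ((real r - 1) * W r {} + W 0 {}) / real r"
      using B rpos by (intro divide_right_mono) auto
    also have "\<dots> = W r {} - (W r {} - W 0 {}) / real r"
      using rpos by (simp add: field_simps)
    finally have "D \<ge> (W r {} - W 0 {}) / real r" using D by simp
    then have DE: "D \<ge> E / real r" unfolding E_def ent_eq .
    have Epos: "E > 0" using ent_nn f(2) unfolding E_def by simp
    have "1 / real r = (E / real r) / E" using Epos by simp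
    also have "\<dots> \<le> D / E" using DE Epos by (intro divide_right_mono) auto
    finally show ?thesis unfolding D_def E_def by simp
  qed
  show ?thesis unfolding mlsi_const_def
    by (rule INF_greatest) (use main in auto)
qed

theorem theorem1p1:
  fixes n r :: nat and \<pi> :: "nat set \<Rightarrow> real"
  assumes "r \<ge> 2"
    and "is_distribution n \<pi>"
    and "homogeneous r \<pi>"
    and "strongly_log_concave n (gen_poly n \<pi>)"
  shows "mlsi_const (support \<pi>) \<pi> (bx_walk \<pi>) \<ge> ereal (1 / real r)"
  using theorem1p1_aux[OF assms] .

end
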